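(* Let $\delta\in(0,1)$ and let $f:G_\delta\to\mathbb{C}$ be a function. Suppose there are a Hilbert space $\mathcal{M}$, a unitary operator $U$ on $\mathcal{M}$ and a map $u:G_\delta\to\mathcal{M}$ such that for all $\lambda,\mu\in G_\delta$, $$1-\overline{f(\mu)}f(\lambda)=\langle(1-\mu_U^*\lambda_U)u(\lambda),u(\mu)\rangle_{\mathcal{M}}.$$ Then $f$ is holomorphic on $G_\delta$.
   Context: $G_\delta=\{x+iy: x,y\in\mathbb{R},\ \frac{x^2}{(1+\delta)^2}+\frac{y^2}{(1-\delta)^2}<1\}$. For $\lambda\in G_\delta$ and a unitary $U$ on $\mathcal{M}$, $\lambda_U=(\delta U^*-\tfrac12\lambda)(1-\tfrac12\lambda U^* )^{-1}$. *)

theory Defs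
  imports "HOL-Analysis.Analysis"
begin

definition G_delta :: "real \<Rightarrow> complex set" where
  "G_delta \<delta> = {z. (Re z)\<^sup>2 / (1 + \<delta>)\<^sup>2 + (Im z)\<^sup>2 / (1 - \<delta>)\<^sup>2 < 1}"

text \<open>A complex Hilbert space, carried by a type 'm with addition from ab_group_add,
  complex scalar multiplication sc and inner product ip (linear in the first argument,
  conjugate-linear in the second), complete for the induced norm.\<close>
definition hnorm :: "('m \<Rightarrow> 'm \<Rightarrow> complex) \<Rightarrow> 'm \<Rightarrow> real" where
  "hnorm ip x = sqrt (Re (ip x x))"

definition hilbert_space ::
  "(complex \<Rightarrow> 'm::ab_group_add \<Rightarrow> 'm) \<Rightarrow> ('m \<Rightarrow> 'm \<Rightarrow> complex) \<Rightarrow> bool" where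
  "hilbert_space sc ip \<longleftrightarrow>
     vector_space sc \<and>
     (\<forall>x y z. ip (x + y) z = ip x z + ip y z) \<and>
     (\<forall>a x y. ip (sc a x) y = a * ip x y) \<and>
     (\<forall>x y. ip y x = cnj (ip x y)) \<and>
     (\<forall>x. Im (ip x x) = 0 \<and> Re (ip x x) \<ge> 0) \<and>
     (\<forall>x. ip x x = 0 \<longrightarrow> x = 0) \<and>
     (\<forall>X :: nat \<Rightarrow> 'm.
        (\<forall>e>0. \<exists>N. \<forall>m\<ge>N. \<forall>n\<ge>N. hnorm ip (X m - X n) < e) \<longrightarrow>
        (\<exists>l. (\<lambda>n. hnorm ip (X n - l)) \<longlonglongrightarrow> 0))"

definition hadj :: "('m \<Rightarrow> 'm \<Rightarrow> complex) \<Rightarrow> ('m \<Rightarrow> 'm) \<Rightarrow> ('m \<Rightarrow> 'm)" where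
  "hadj ip T = (SOME S. \<forall>x y. ip (T x) y = ip x (S y))"

definition unitary_op ::
  "(complex \<Rightarrow> 'm::ab_group_add \<Rightarrow> 'm) \<Rightarrow> ('m \<Rightarrow> 'm \<Rightarrow> complex) \<Rightarrow> ('m \<Rightarrow> 'm) \<Rightarrow> bool" where
  "unitary_op sc ip U \<longleftrightarrow> Vector_Spaces.linear sc sc U \<and> surj U \<and>
     (\<forall>x y. ip (U x) (U y) = ip x y)"

text \<open>lambda_U = (delta U^* - lambda/2)(1 - lambda/2 U^*)^{-1}.\<close>
definition lamU ::
  "(complex \<Rightarrow> 'm::ab_group_add \<Rightarrow> 'm) \<Rightarrow> ('m \<Rightarrow> 'm \<Rightarrow> complex) \<Rightarrow> real \<Rightarrow> ('m \<Rightarrow> 'm)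
     \<Rightarrow> complex \<Rightarrow> ('m \<Rightarrow> 'm)" where
  "lamU sc ip \<delta> U lam =
     (let Us = hadj ip U;
          A = (\<lambda>x. x - sc (lam / 2) (Us x))
      in (\<lambda>x. sc (complex_of_real \<delta>) (Us (inv A x)) - sc (lam / 2) (inv A x)))"

end

theory Submission
  imports Defs
begin

locale hs =
  fixes sc :: "complex \<Rightarrow> 'm::ab_group_add \<Rightarrow> 'm" and ip :: "'m \<Rightarrow> 'm \<Rightarrow> complex"
  assumes H: "hilbert_space sc ip"
begin

lemmas HH = H[unfolded hilbert_space_def]
lemma vs: "vector_space sc" using HH by (rule conjunct1)

sublocale vector_space sc by (rule vs)

lemma ip_add_l: "ip (x + y) z = ip x z + ip y z" using HH[THEN conjunct2, THEN conjunct1] by blast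
lemma ip_sc_l: "ip (sc a x) y = a * ip x y" using HH[THEN conjunct2, THEN conjunct2, THEN conjunct1] by blast
lemma ip_sym: "ip y x = cnj (ip x y)" using HH[THEN conjunct2, THEN conjunct2, THEN conjunct2, THEN conjunct1] by blast
lemma ip_ReIm: "Im (ip x x) = 0 \<and> Re (ip x x) \<ge> 0" using HH[THEN conjunct2, THEN conjunct2, THEN conjunct2, THEN conjunct2, THEN conjunct1] by blast
lemma ip_Im: "Im (ip x x) = 0" using ip_ReIm by (rule conjunct1)
lemma ip_Re: "Re (ip x x) \<ge> 0" using ip_ReIm by (rule conjunct2)
lemma ip_def0: "ip x x = 0 \<Longrightarrow> x = 0" using HH[THEN conjunct2, THEN conjunct2, THEN conjunct2, THEN conjunct2, THEN conjunct2, THEN conjunct1, THEN spec, of x] by (rule mp)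
lemma complete: "(\<forall>e>0. \<exists>N. \<forall>m\<ge>N. \<forall>n\<ge>N. hnorm ip (X m - X n) < e) \<Longrightarrow>
        (\<exists>l. (\<lambda>n. hnorm ip (X n - l)) \<longlonglongrightarrow> 0)" using HH[THEN conjunct2, THEN conjunct2, THEN conjunct2, THEN conjunct2, THEN conjunct2, THEN conjunct2, THEN spec, of X] by (rule mp)

lemma ip_add_r: "ip x (y + z) = ip x y + ip x z"
proof -
  have "ip x (y + z) = cnj (ip (y + z) x)" by (rule ip_sym)
  also have "\<dots> = cnj (ip y x) + cnj (ip z x)" by (simp only: ip_add_l complex_cnj_add)
  also have "\<dots> = ip x y + ip x z" by (simp only: ip_sym[of x y] ip_sym[of x z] complex_cnj_cnj)
  finally show ?thesis .
qed
lemma ip_sc_r: "ip x (sc a y) = cnj a * ip x y"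
proof -
  have "ip x (sc a y) = cnj (ip (sc a y) x)" by (rule ip_sym)
  also have "\<dots> = cnj a * cnj (ip y x)" by (simp only: ip_sc_l complex_cnj_mult)
  also have "\<dots> = cnj a * ip x y" by (simp only: ip_sym[of x y] complex_cnj_cnj)
  finally show ?thesis .
qed
lemma ip_0_l[simp]: "ip 0 y = 0"
  using ip_add_l[of 0 0 y] by simp
lemma ip_0_r[simp]: "ip y 0 = 0"
  using ip_add_r[of y 0 0] by simp
lemma ip_neg_l: "ip (- x) y = - ip x y"
proof -
  have "ip x y + ip (- x) y = 0" using ip_add_l[of x "-x" y] by simp
  then show ?thesis by (simp add: add_eq_0_iff)
qed
lemma ip_neg_r: "ip y (- x) = - ip y x"
proof -
  have "ip y x + ip y (- x) = 0" using ip_add_r[of y x "-x"] by simp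
  then show ?thesis by (simp add: add_eq_0_iff)
qed
lemma ip_diff_l: "ip (x - z) y = ip x y - ip z y"
  by (simp only: diff_conv_add_uminus ip_add_l ip_neg_l)
lemma ip_diff_r: "ip y (x - z) = ip y x - ip y z"
  by (simp only: diff_conv_add_uminus ip_add_r ip_neg_r)

lemmas ip_simps = ip_add_l ip_add_r ip_sc_l ip_sc_r ip_neg_l ip_neg_r ip_diff_l ip_diff_r

definition N :: "'m \<Rightarrow> real" where "N x = hnorm ip x"

lemma N_nonneg[simp]: "N x \<ge> 0" by (simp add: N_def hnorm_def ip_Re)
lemma ip_self: "ip x x = complex_of_real ((N x)\<^sup>2)"
  using ip_Im[of x] ip_Re[of x] by (simp add: N_def hnorm_def complex_eq_iff)
lemma Re_ip_self: "Re (ip x x) = (N x)\<^sup>2" by (simp add: ip_self)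
lemma N_0_iff: "N x = 0 \<longleftrightarrow> x = 0"
  using ip_self[of x] ip_def0[of x] by auto

lemma N_zero[simp]: "N 0 = 0" using N_0_iff by simp

lemma CS: "cmod (ip x y) \<le> N x * N y"
proof (cases "y = 0")
  case True then show ?thesis by simp
next
  case False
  define n2 where "n2 = (N y)\<^sup>2"
  have n2pos: "n2 > 0" using False N_0_iff[of y] N_nonneg[of y] by (simp add: n2_def)
  define k where "k = ip x y"
  define t where "t = k / of_real n2"
  have "0 \<le> Re (ip (x - sc t y) (x - sc t y))" by (rule ip_Re)
  also have "ip (x - sc t y) (x - sc t y) = ip x x - cnj t * k - t * cnj k + t * cnj t * of_real n2"
  proof -
    have a: "ip y x = cnj k" unfolding k_def by (rule ip_sym)
    have b: "ip y y = of_real n2" unfolding n2_def by (rule ip_self)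
    show ?thesis
      by (simp only: ip_diff_l ip_diff_r ip_sc_l ip_sc_r a b k_def[symmetric]) (simp add: algebra_simps)
  qed
  also have "\<dots> = of_real ((N x)\<^sup>2 - (cmod k)\<^sup>2 / n2)"
  proof -
    have kk: "cnj k * k = of_real ((cmod k)\<^sup>2)" using complex_norm_square[of k] by (simp add: mult.commute)
    have kk2: "k * cnj k = of_real ((cmod k)\<^sup>2)" using complex_norm_square[of k] by simp
    have "cnj t * k = of_real ((cmod k)\<^sup>2 / n2)" unfolding t_def by (simp add: kk)
    moreover have "t * cnj k = of_real ((cmod k)\<^sup>2 / n2)" unfolding t_def by (simp add: kk2)
    moreover have "t * cnj t * of_real n2 = of_real ((cmod k)\<^sup>2 / n2)" unfolding t_def using n2pos
      by (simp add: kk2 field_simps)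
    ultimately show ?thesis by (simp add: ip_self)
  qed
  finally have "(cmod k)\<^sup>2 / n2 \<le> (N x)\<^sup>2" by simp
  then have "(cmod k)\<^sup>2 \<le> (N x)\<^sup>2 * (N y)\<^sup>2" using n2pos by (simp add: pos_divide_le_eq n2_def)
  then have "(cmod k)\<^sup>2 \<le> (N x * N y)\<^sup>2" by (simp add: power_mult_distrib)
  then show ?thesis unfolding k_def
    by (rule power2_le_imp_le) simp
qed

lemma Re_ip_le: "Re (ip x y) \<le> N x * N y"
  using CS[of x y] complex_Re_le_cmod[of "ip x y"] by linarith
lemma abs_Re_ip_le: "\<bar>Re (ip x y)\<bar> \<le> N x * N y"
  using CS[of x y] abs_Re_le_cmod[of "ip x y"] by linarith

lemma N_sc: "N (sc a x) = cmod a * N x"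
proof -
  have "ip (sc a x) (sc a x) = a * cnj a * ip x x" by (simp only: ip_sc_l ip_sc_r) (simp add: ac_simps)
  also have "\<dots> = of_real ((cmod a * N x)\<^sup>2)"
    by (simp only: ip_self complex_norm_square[symmetric] power_mult_distrib of_real_mult)
  finally have "(N (sc a x))\<^sup>2 = (cmod a * N x)\<^sup>2" by (simp only: ip_self of_real_eq_iff)
  then show ?thesis by (simp add: power2_eq_iff_nonneg)
qed

lemma N_add: "N (x + y) \<le> N x + N y"
proof -
  have e: "ip (x + y) (x + y) = ip x x + ip x y + cnj (ip x y) + ip y y"
    by (simp only: ip_add_l ip_add_r ip_sym[of y x]) (simp add: ac_simps)
  have "(N (x + y))\<^sup>2 = (N x)\<^sup>2 + 2 * Re (ip x y) + (N y)\<^sup>2"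
    using arg_cong[OF e, of Re] by (simp add: Re_ip_self)
  also have "\<dots> \<le> (N x + N y)\<^sup>2" using Re_ip_le[of x y] by (simp add: power2_eq_square algebra_simps)
  finally show ?thesis by (rule power2_le_imp_le) simp
qed

lemma N_neg: "N (- x) = N x" using N_sc[of "-1" x] by simp
lemma N_diff: "N (x - y) \<le> N x + N y" using N_add[of x "-y"] by (simp add: N_neg)
lemma N_commute: "N (x - y) = N (y - x)" using N_neg[of "x - y"] by simp
lemma N_tri: "N (x - z) \<le> N (x - y) + N (y - z)" using N_add[of "x - y" "y - z"] by simp

end

locale uni = hs sc ip for sc :: "complex \<Rightarrow> 'm::ab_group_add \<Rightarrow> 'm" and ip +
  fixes U :: "'m \<Rightarrow> 'm"
  assumes UU: "unitary_op sc ip U"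
begin

lemma U_lin: "Vector_Spaces.linear sc sc U" using UU unfolding unitary_op_def by blast
lemma U_add: "U (x + y) = U x + U y" using U_lin unfolding Vector_Spaces.linear_iff by blast
lemma U_sc: "U (sc a x) = sc a (U x)" using U_lin unfolding Vector_Spaces.linear_iff by blast
lemma U_surj: "surj U" using UU unfolding unitary_op_def by blast
lemma U_ip: "ip (U x) (U y) = ip x y" using UU unfolding unitary_op_def by blast

interpretation Uadd: additive U by unfold_locales (rule U_add)

lemma U_diff: "U (x - y) = U x - U y" by (rule Uadd.diff)
lemma N_U: "N (U x) = N x" by (simp add: N_def hnorm_def U_ip)

lemma U_inj: "inj U"
proof (rule injI)
  fix x y assume "U x = U y"
  then have "N (U (x - y)) = 0" by (simp add: U_diff N_0_iff)
  then have "x - y = 0" by (simp add: N_U N_0_iff)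
  then show "x = y" by simp
qed

definition V where "V = inv U"

lemma UV: "U (V x) = x" unfolding V_def using U_surj by (simp add: surj_f_inv_f)
lemma VU: "V (U x) = x" unfolding V_def using U_inj by simp

lemma V_add: "V (x + y) = V x + V y"
  using U_inj by (rule injD) (simp add: U_add UV)
lemma V_sc: "V (sc a x) = sc a (V x)"
  using U_inj by (rule injD) (simp add: U_sc UV)

interpretation Vadd: additive V by unfold_locales (rule V_add)
lemma V_diff: "V (x - y) = V x - V y" by (rule Vadd.diff)
lemma V_ip: "ip (V x) (V y) = ip x y" by (metis U_ip UV)
lemma N_V: "N (V x) = N x" by (simp add: N_def hnorm_def V_ip)
lemma adjU: "ip (U x) y = ip x (V y)" by (metis U_ip UV)
lemma adjV: "ip (V x) y = ip x (U y)" by (metis U_ip UV)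

lemma hadjU: "hadj ip U = V"
proof -
  have ex: "\<exists>S. \<forall>x y. ip (U x) y = ip x (S y)" using adjU by blast
  have S: "\<forall>x y. ip (U x) y = ip x (hadj ip U y)"
    unfolding hadj_def by (rule someI_ex[OF ex])
  show ?thesis
  proof
    fix y
    have "ip x (hadj ip U y - V y) = 0" for x using S adjU by (simp add: ip_diff_r)
    then have "ip (hadj ip U y - V y) (hadj ip U y - V y) = 0" by blast
    then have "hadj ip U y - V y = 0" by (rule ip_def0)
    then show "hadj ip U y = V y" by simp
  qed
qed

end

context hs begin

lemma A_bij:
  fixes W :: "'m \<Rightarrow> 'm"
  assumes Wadd: "\<And>x y. W (x + y) = W x + W y" and Wsc: "\<And>a x. W (sc a x) = sc a (W x)"
    and WN: "\<And>x. N (W x) = N x" and z: "cmod z < 1"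
  shows "bij (\<lambda>x. x - sc z (W x))"
proof -
  interpret Wa: additive W by unfold_locales (rule Wadd)
  define r where "r = cmod z"
  have r0: "0 \<le> r" and r1: "r < 1" using z by (auto simp: r_def)
  have inj: "inj (\<lambda>x. x - sc z (W x))"
  proof (rule injI)
    fix a b assume "a - sc z (W a) = b - sc z (W b)"
    then have "a - b = sc z (W (a - b))"
      by (simp only: Wa.diff scale_right_diff_distrib) (metis diff_diff_eq2 diff_eq_eq add.commute)
    then have "N (a - b) = r * N (a - b)" by (metis N_sc WN r_def)
    then have "N (a - b) = 0" using r1 by (metis mult_cancel_right1 less_irrefl)
    then show "a = b" by (simp add: N_0_iff)
  qed
  have surj: "\<exists>l. l - sc z (W l) = x" for x
  proof -
    define F where "F y = x + sc z (W y)" for y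
    define ys where "ys n = (F ^^ n) 0" for n
    have ys_Suc: "ys (Suc n) = x + sc z (W (ys n))" for n by (simp add: ys_def F_def)
    have ys0: "ys 0 = 0" by (simp add: ys_def)
    have stp: "N (ys (Suc n) - ys n) \<le> r ^ n * N x" for n
    proof (induction n)
      case 0
      have "ys (Suc 0) - ys 0 = x" by (simp add: ys_Suc ys0 Wa.zero)
      then show ?case by simp
    next
      case (Suc n)
      have "ys (Suc (Suc n)) - ys (Suc n) = sc z (W (ys (Suc n) - ys n))"
        by (simp only: ys_Suc Wa.diff scale_right_diff_distrib) simp
      then have "N (ys (Suc (Suc n)) - ys (Suc n)) = r * N (ys (Suc n) - ys n)"
        by (simp add: N_sc WN r_def)
      also have "\<dots> \<le> r * (r ^ n * N x)" using Suc r0 by (rule mult_left_mono)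
      finally show ?case by simp
    qed
    have cb: "N (ys m - ys n) \<le> (r ^ n - r ^ m) / (1 - r) * N x" if "n \<le> m" for m n
      using that
    proof (induction m rule: dec_induct)
      case base then show ?case using N_0_iff[of 0] by simp
    next
      case (step m)
      have "N (ys (Suc m) - ys n) \<le> N (ys (Suc m) - ys m) + N (ys m - ys n)" by (rule N_tri)
      also have "\<dots> \<le> r ^ m * N x + (r ^ n - r ^ m) / (1 - r) * N x"
        using step.IH step stp[of m] by (intro add_mono) auto
      also have "\<dots> = (r ^ n - r ^ Suc m) / (1 - r) * N x" using r1 by (simp add: field_simps)
      finally show ?case .
    qed
    have cb2: "N (ys m - ys n) \<le> r ^ min m n / (1 - r) * N x" for m n
    proof (cases "n \<le> m")
      case True
      have "(r ^ n - r ^ m) / (1 - r) * N x \<le> r ^ n / (1 - r) * N x"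
        using r0 r1 by (intro mult_right_mono divide_right_mono) auto
      moreover have "min m n = n" using True by (simp add: min_def)
      ultimately show ?thesis using cb[OF True] by simp
    next
      case False
      have "(r ^ m - r ^ n) / (1 - r) * N x \<le> r ^ m / (1 - r) * N x"
        using r0 r1 by (intro mult_right_mono divide_right_mono) auto
      moreover have "min m n = m" using False by (simp add: min_def)
      moreover have "N (ys m - ys n) \<le> (r ^ m - r ^ n) / (1 - r) * N x"
        using cb[of m n] False N_commute[of "ys m" "ys n"] by simp
      ultimately show ?thesis by simp
    qed
    have rpow: "(\<lambda>n. r ^ n) \<longlonglongrightarrow> 0" using LIMSEQ_power_zero[of r] r0 r1 by simp
    have "(\<lambda>n. r ^ n * (N x / (1 - r))) \<longlonglongrightarrow> 0 * (N x / (1 - r))"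
      by (rule tendsto_mult_right[OF rpow])
    moreover have "r ^ n * (N x / (1 - r)) = r ^ n / (1 - r) * N x" for n by simp
    ultimately have rn0: "(\<lambda>n. r ^ n / (1 - r) * N x) \<longlonglongrightarrow> 0" by simp
    have "\<exists>l. (\<lambda>n. hnorm ip (ys n - l)) \<longlonglongrightarrow> 0"
    proof (rule complete, intro allI impI)
      fix e :: real assume e: "e > 0"
      obtain M where M: "\<forall>n\<ge>M. \<bar>r ^ n / (1 - r) * N x - 0\<bar> < e"
        using rn0 e unfolding LIMSEQ_def dist_real_def by blast
      show "\<exists>M. \<forall>m\<ge>M. \<forall>n\<ge>M. hnorm ip (ys m - ys n) < e"
      proof (intro exI allI impI)
        fix m n assume "m \<ge> M" "n \<ge> M"
        then have "min m n \<ge> M" by simp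
        then have "\<bar>r ^ min m n / (1 - r) * N x - 0\<bar> < e" using M by blast
        then have "r ^ min m n / (1 - r) * N x < e" by (metis abs_ge_self diff_zero order_le_less_trans)
        then show "hnorm ip (ys m - ys n) < e" using cb2[of m n] by (simp add: N_def[symmetric])
      qed
    qed
    then obtain l where l: "(\<lambda>n. N (ys n - l)) \<longlonglongrightarrow> 0" by (auto simp: N_def)
    have key: "N ((l - sc z (W l)) - x) \<le> (1 + r) * N (ys n - l) + r ^ n * N x" for n
    proof -
      have e: "(l - sc z (W l)) - x = (l - ys n) - sc z (W (l - ys n)) + (ys n - ys (Suc n))"
      proof -
        have g: "\<And>l A x y B :: 'm. l - A - x = l - y - (A - B) + (y - (x + B))"
          by (simp add: algebra_simps)
        show ?thesis by (simp only: ys_Suc Wa.diff scale_right_diff_distrib g[symmetric])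
      qed
      have "N ((l - sc z (W l)) - x) = N ((l - ys n) - sc z (W (l - ys n)) + (ys n - ys (Suc n)))"
        by (simp only: e)
      moreover have "N ((l - ys n) - sc z (W (l - ys n)) + (ys n - ys (Suc n))) \<le> N ((l - ys n) - sc z (W (l - ys n))) + N (ys n - ys (Suc n))"
        by (rule N_add)
      moreover have "N ((l - ys n) - sc z (W (l - ys n))) \<le> N (l - ys n) + N (sc z (W (l - ys n)))"
        by (rule N_diff)
      moreover have "N (sc z (W (l - ys n))) = r * N (ys n - l)" by (simp add: N_sc WN r_def N_commute[of l])
      moreover have "N (l - ys n) = N (ys n - l)" by (rule N_commute)
      moreover have "N (ys n - ys (Suc n)) = N (ys (Suc n) - ys n)" by (rule N_commute)
      moreover have "N (ys (Suc n) - ys n) \<le> r ^ n * N x" by (rule stp)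
      ultimately show ?thesis using distrib_right[of 1 r "N (ys n - l)"] by linarith
    qed
    have "N ((l - sc z (W l)) - x) \<le> 0"
    proof (rule LIMSEQ_le_const)
      have "(\<lambda>n. (1 + r) * N (ys n - l) + r ^ n * N x) \<longlonglongrightarrow> (1 + r) * 0 + 0 * N x"
        by (rule tendsto_add[OF tendsto_mult_left[OF l] tendsto_mult_right[OF rpow]])
      then show "(\<lambda>n. (1 + r) * N (ys n - l) + r ^ n * N x) \<longlonglongrightarrow> 0" by simp
      show "\<exists>M. \<forall>n\<ge>M. N ((l - sc z (W l)) - x) \<le> (1 + r) * N (ys n - l) + r ^ n * N x"
        using key by blast
    qed
    then have "(l - sc z (W l)) - x = 0" using N_nonneg N_0_iff by (metis order_antisym)
    then show ?thesis by auto
  qed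
  show ?thesis unfolding bij_def surj_def using inj surj by (metis (no_types, lifting))
qed

end

locale main = uni sc ip U for sc :: "complex \<Rightarrow> 'm::ab_group_add \<Rightarrow> 'm" and ip and U +
  fixes \<delta> :: real and f :: "complex \<Rightarrow> complex" and u :: "complex \<Rightarrow> 'm"
  assumes d0: "0 < \<delta>" and d1: "\<delta> < 1"
    and hyp: "\<forall>lam\<in>G_delta \<delta>. \<forall>mu\<in>G_delta \<delta>.
           1 - cnj (f mu) * f lam =
           ip (u lam - hadj ip (lamU sc ip \<delta> U mu) (lamU sc ip \<delta> U lam (u lam))) (u mu)"
begin

definition A where "A z = (\<lambda>x. x - sc z (V x))"
definition B where "B z = inv (A z)"
definition A' where "A' z = (\<lambda>x. x - sc (cnj z) (U x))"
definition B' where "B' z = inv (A' z)"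
definition T where "T z x = sc (complex_of_real \<delta>) (V (B z x)) - sc z (B z x)"
definition S where "S z y = B' z (sc (complex_of_real \<delta>) (U y) - sc (cnj z) y)"

lemma A_bij': "cmod z < 1 \<Longrightarrow> bij (A z)"
  unfolding A_def by (rule A_bij) (auto simp: V_add V_sc N_V)
lemma A'_bij': "cmod z < 1 \<Longrightarrow> bij (A' z)"
  unfolding A'_def by (rule A_bij) (auto simp: U_add U_sc N_U)

lemma AB: "cmod z < 1 \<Longrightarrow> A z (B z x) = x"
  unfolding B_def using A_bij' bij_is_surj surj_f_inv_f by metis
lemma A'B': "cmod z < 1 \<Longrightarrow> A' z (B' z x) = x"
  unfolding B'_def using A'_bij' bij_is_surj surj_f_inv_f by metis

lemma lamU_eq: "lamU sc ip \<delta> U lam = T (lam / 2)"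
  unfolding lamU_def Let_def hadjU T_def B_def A_def by simp

lemma T_adj: assumes z: "cmod z < 1" shows "ip (T z x) y = ip x (S z y)"
proof -
  define b where "b = B z x"
  define t where "t = sc (complex_of_real \<delta>) (U y) - sc (cnj z) y"
  define b' where "b' = B' z t"
  have Ab: "A z b = x" unfolding b_def by (rule AB[OF z])
  have Ab': "A' z b' = t" unfolding b'_def by (rule A'B'[OF z])
  have "ip (T z x) y = ip b t"
    unfolding T_def b_def[symmetric] t_def
    by (simp add: ip_diff_l ip_diff_r ip_sc_l ip_sc_r adjV)
  also have "\<dots> = ip b b' - z * ip b (U b')"
    unfolding Ab'[symmetric] A'_def by (simp add: ip_diff_r ip_sc_r)
  also have "\<dots> = ip x b'"
    unfolding Ab[symmetric] A_def by (simp add: ip_diff_l ip_sc_l adjV)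
  finally show ?thesis unfolding S_def b'_def t_def .
qed

lemma hadjT: assumes z: "cmod z < 1" shows "ip (hadj ip (T z) v) c = ip v (T z c)"
proof -
  have ex: "\<exists>S. \<forall>x y. ip (T z x) y = ip x (S y)" using T_adj[OF z] by blast
  have H: "\<forall>x y. ip (T z x) y = ip x (hadj ip (T z) y)"
    unfolding hadj_def by (rule someI_ex[OF ex])
  have "ip (hadj ip (T z) v) c = cnj (ip c (hadj ip (T z) v))" by (rule ip_sym)
  also have "\<dots> = cnj (ip (T z c) v)" using H by simp
  also have "\<dots> = ip v (T z c)" by (rule ip_sym[symmetric])
  finally show ?thesis .
qed

lemma G_half: assumes "lam \<in> G_delta \<delta>" shows "cmod (lam / 2) < 1"
proof -
  have g: "(Re lam)\<^sup>2 / (1 + \<delta>)\<^sup>2 + (Im lam)\<^sup>2 / (1 - \<delta>)\<^sup>2 < 1"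
    using assms by (simp add: G_delta_def)
  have p1: "(1 + \<delta>)\<^sup>2 > 0" "(1 - \<delta>)\<^sup>2 > 0" using d0 d1 by auto
  have "(Im lam)\<^sup>2 / (1 + \<delta>)\<^sup>2 \<le> (Im lam)\<^sup>2 / (1 - \<delta>)\<^sup>2"
    using d0 d1 by (intro divide_left_mono) (auto simp: power2_eq_square intro!: mult_mono)
  with g have "((Re lam)\<^sup>2 + (Im lam)\<^sup>2) / (1 + \<delta>)\<^sup>2 < 1" by (simp add: add_divide_distrib)
  then have "(Re lam)\<^sup>2 + (Im lam)\<^sup>2 < (1 + \<delta>)\<^sup>2" using p1 by (simp add: divide_less_eq)
  also have "\<dots> < 2\<^sup>2" using d0 d1 by (intro power_strict_mono) auto
  finally have "(cmod lam)\<^sup>2 < 2\<^sup>2" by (simp add: cmod_power2)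
  then have "cmod lam < 2" by (rule power_less_imp_less_base) simp
  then show ?thesis by (simp add: norm_divide)
qed

lemma K: assumes "lam \<in> G_delta \<delta>" "mu \<in> G_delta \<delta>"
  shows "ip (u lam) (u mu) - ip (T (lam/2) (u lam)) (T (mu/2) (u mu)) = 1 - cnj (f mu) * f lam"
  using hyp assms hadjT[OF G_half[OF assms(2)]] by (simp add: lamU_eq ip_diff_l)

definition y where "y lam = B (lam/2) (u lam)"

lemma u_y: "lam \<in> G_delta \<delta> \<Longrightarrow> u lam = y lam - sc (lam/2) (V (y lam))"
  unfolding y_def using AB[OF G_half] by (simp add: A_def)
lemma Tu_y: "T (lam/2) (u lam) = sc (complex_of_real \<delta>) (V (y lam)) - sc (lam/2) (y lam)"
  unfolding y_def T_def ..

definition B2 where "B2 a a1 b b1 = complex_of_real (1 - \<delta>\<^sup>2) * ip a b - ip a (V b1) - ip (V a1) b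
   + complex_of_real \<delta> * ip (V a) b1 + complex_of_real \<delta> * ip a1 (V b)"

lemma B2_eq: "ip (a - sc z (V a)) (b - sc z' (V b)) - ip (sc (complex_of_real \<delta>) (V a) - sc z a) (sc (complex_of_real \<delta>) (V b) - sc z' b)
   = B2 a (sc z a) b (sc z' b)"
  unfolding B2_def
  by (simp add: ip_diff_l ip_diff_r ip_sc_l ip_sc_r V_sc V_ip algebra_simps power2_eq_square)

lemma KB: assumes "lam \<in> G_delta \<delta>" "nu \<in> G_delta \<delta>"
  shows "B2 (y lam) (sc (lam/2) (y lam)) (y nu) (sc (nu/2) (y nu)) = 1 - cnj (f nu) * f lam"
  using K[OF assms] B2_eq u_y[OF assms(1)] u_y[OF assms(2)] Tu_y by metis

lemma B2_add_l: "B2 (a + a') (a1 + a1') b b1 = B2 a a1 b b1 + B2 a' a1' b b1"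
  unfolding B2_def by (simp add: ip_add_l V_add algebra_simps)
lemma B2_diff_l: "B2 (a - a') (a1 - a1') b b1 = B2 a a1 b b1 - B2 a' a1' b b1"
  unfolding B2_def by (simp add: ip_diff_l V_diff algebra_simps)
lemma B2_sc_l: "B2 (sc c a) (sc c a1) b b1 = c * B2 a a1 b b1"
  unfolding B2_def by (simp add: ip_sc_l V_sc algebra_simps)
lemma B2_add_r: "B2 a a1 (b + b') (b1 + b1') = B2 a a1 b b1 + B2 a a1 b' b1'"
  unfolding B2_def by (simp add: ip_add_r V_add algebra_simps)
lemma B2_diff_r: "B2 a a1 (b - b') (b1 - b1') = B2 a a1 b b1 - B2 a a1 b' b1'"
  unfolding B2_def by (simp add: ip_diff_r V_diff algebra_simps)
lemma B2_sc_r: "B2 a a1 (sc c b) (sc c b1) = cnj c * B2 a a1 b b1"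
  unfolding B2_def by (simp add: ip_sc_r V_sc algebra_simps)

end

lemma cs2: fixes \<alpha> \<beta> x y :: real
  shows "\<bar>\<alpha> * x + \<beta> * y\<bar> \<le> sqrt (\<alpha>\<^sup>2 + \<beta>\<^sup>2) * sqrt (x\<^sup>2 + y\<^sup>2)"
proof -
  have e: "(\<alpha> * x + \<beta> * y)\<^sup>2 + (\<alpha> * y - \<beta> * x)\<^sup>2 = (\<alpha>\<^sup>2 + \<beta>\<^sup>2) * (x\<^sup>2 + y\<^sup>2)"
    by (simp add: power2_eq_square algebra_simps)
  have "(\<alpha> * x + \<beta> * y)\<^sup>2 \<le> (\<alpha>\<^sup>2 + \<beta>\<^sup>2) * (x\<^sup>2 + y\<^sup>2)"
    using e by (metis le_add_same_cancel1 zero_le_power2)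
  then have "sqrt ((\<alpha> * x + \<beta> * y)\<^sup>2) \<le> sqrt ((\<alpha>\<^sup>2 + \<beta>\<^sup>2) * (x\<^sup>2 + y\<^sup>2))"
    by (rule real_sqrt_le_mono)
  then show ?thesis by (simp add: real_sqrt_mult)
qed

lemma tri4: fixes a b c d :: complex shows "cmod (a + b + c + d) \<le> cmod a + cmod b + cmod c + cmod d"
  using norm_triangle_ineq[of "a+b+c" d] norm_triangle_ineq[of "a+b" c] norm_triangle_ineq[of a b] by linarith

context main begin

definition cw :: "complex \<Rightarrow> real" where
  "cw w = 1 - \<delta>\<^sup>2 - 2 * sqrt (((1 - \<delta>) * Re w)\<^sup>2 + ((1 + \<delta>) * Im w)\<^sup>2)"

lemma cw_pos: assumes "mu \<in> G_delta \<delta>" shows "cw (mu / 2) > 0"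
proof -
  define X where "X = (Re mu)\<^sup>2 / (1 + \<delta>)\<^sup>2"
  define Y where "Y = (Im mu)\<^sup>2 / (1 - \<delta>)\<^sup>2"
  have XY: "X + Y < 1" using assms by (simp add: G_delta_def X_def Y_def)
  have X0: "X \<ge> 0" "Y \<ge> 0" by (auto simp: X_def Y_def)
  have p: "(1 + \<delta>)\<^sup>2 > 0" "(1 - \<delta>)\<^sup>2 > 0" using d0 d1 by auto
  have ReX: "(Re mu)\<^sup>2 = X * (1 + \<delta>)\<^sup>2" using p by (simp add: X_def)
  have ImY: "(Im mu)\<^sup>2 = Y * (1 - \<delta>)\<^sup>2" using p by (simp add: Y_def)
  define s2 where "s2 = ((1 - \<delta>) * Re (mu/2))\<^sup>2 + ((1 + \<delta>) * Im (mu/2))\<^sup>2"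
  have "s2 = ((1 - \<delta>)\<^sup>2 * (Re mu)\<^sup>2 + (1 + \<delta>)\<^sup>2 * (Im mu)\<^sup>2) / 4"
    by (simp add: s2_def power2_eq_square field_simps)
  also have "\<dots> = ((1 - \<delta>)\<^sup>2 * (1 + \<delta>)\<^sup>2) * (X + Y) / 4"
    by (simp add: ReX ImY algebra_simps)
  also have "\<dots> < ((1 - \<delta>)\<^sup>2 * (1 + \<delta>)\<^sup>2) / 4"
    using XY p by (simp add: divide_strict_right_mono)
  also have "\<dots> = ((1 - \<delta>\<^sup>2) / 2)\<^sup>2" by (simp add: power2_eq_square algebra_simps)
  finally have "s2 < ((1 - \<delta>\<^sup>2) / 2)\<^sup>2" .
  moreover have "\<delta>\<^sup>2 < 1\<^sup>2" using d0 d1 by (intro power_strict_mono) auto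
  then have "1 - \<delta>\<^sup>2 > 0" by simp
  ultimately have "sqrt s2 < sqrt (((1 - \<delta>\<^sup>2) / 2)\<^sup>2)" using real_sqrt_less_mono by blast
  then have "sqrt s2 < (1 - \<delta>\<^sup>2) / 2" using \<open>1 - \<delta>\<^sup>2 > 0\<close> by simp
  then show ?thesis unfolding cw_def s2_def[symmetric] by simp
qed

lemma core: "Re (B2 Y (sc w Y + t) Y (sc w Y + t)) \<ge> cw w * (N Y)\<^sup>2 - 2 * (1 + \<delta>) * N Y * N t"
proof -
  define p where "p = ip (V Y) Y"
  define Rt where "Rt = - ip Y (V t) - ip (V t) Y + complex_of_real \<delta> * ip (V Y) t + complex_of_real \<delta> * ip t (V Y)"
  have e1: "B2 Y (sc w Y + t) Y (sc w Y + t) = B2 Y (sc w Y) Y (sc w Y) + Rt"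
    unfolding B2_def Rt_def by (simp add: ip_add_l ip_add_r V_add algebra_simps)
  have cp: "ip Y (V Y) = cnj p" unfolding p_def by (rule ip_sym)
  have e2: "B2 Y (sc w Y) Y (sc w Y) = complex_of_real (1 - \<delta>\<^sup>2) * ip Y Y - cnj w * cnj p - w * p
      + complex_of_real \<delta> * cnj w * p + complex_of_real \<delta> * w * cnj p"
    unfolding B2_def by (simp add: ip_sc_l ip_sc_r V_sc cp p_def[symmetric] algebra_simps)
  have e3: "Re (B2 Y (sc w Y) Y (sc w Y)) = (1 - \<delta>\<^sup>2) * (N Y)\<^sup>2 + (- 2 * (1 - \<delta>) * Re w) * Re p + (2 * (1 + \<delta>) * Im w) * Im p"
    unfolding e2 by (simp add: ip_self algebra_simps)
  have s: "sqrt ((- 2 * (1 - \<delta>) * Re w)\<^sup>2 + (2 * (1 + \<delta>) * Im w)\<^sup>2) = 2 * sqrt (((1 - \<delta>) * Re w)\<^sup>2 + ((1 + \<delta>) * Im w)\<^sup>2)"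
  proof -
    have "(- 2 * (1 - \<delta>) * Re w)\<^sup>2 + (2 * (1 + \<delta>) * Im w)\<^sup>2 = 2\<^sup>2 * (((1 - \<delta>) * Re w)\<^sup>2 + ((1 + \<delta>) * Im w)\<^sup>2)"
      by (simp add: power2_eq_square algebra_simps)
    then have "sqrt ((- 2 * (1 - \<delta>) * Re w)\<^sup>2 + (2 * (1 + \<delta>) * Im w)\<^sup>2) = sqrt (2\<^sup>2) * sqrt (((1 - \<delta>) * Re w)\<^sup>2 + ((1 + \<delta>) * Im w)\<^sup>2)"
      by (simp only: real_sqrt_mult)
    then show ?thesis by simp
  qed
  have pn: "sqrt ((Re p)\<^sup>2 + (Im p)\<^sup>2) \<le> (N Y)\<^sup>2"
  proof -
    have "sqrt ((Re p)\<^sup>2 + (Im p)\<^sup>2) = cmod p" by (simp add: norm_complex_def)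
    also have "\<dots> \<le> N (V Y) * N Y" unfolding p_def by (rule CS)
    finally show ?thesis by (simp add: N_V power2_eq_square)
  qed
  have e4: "(- 2 * (1 - \<delta>) * Re w) * Re p + (2 * (1 + \<delta>) * Im w) * Im p \<ge> - (2 * sqrt (((1 - \<delta>) * Re w)\<^sup>2 + ((1 + \<delta>) * Im w)\<^sup>2)) * (N Y)\<^sup>2"
  proof -
    have "\<bar>(- 2 * (1 - \<delta>) * Re w) * Re p + (2 * (1 + \<delta>) * Im w) * Im p\<bar> \<le> 2 * sqrt (((1 - \<delta>) * Re w)\<^sup>2 + ((1 + \<delta>) * Im w)\<^sup>2) * sqrt ((Re p)\<^sup>2 + (Im p)\<^sup>2)"
      using cs2[of "- 2 * (1 - \<delta>) * Re w" "Re p" "2 * (1 + \<delta>) * Im w" "Im p"] s by simp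
    also have "\<dots> \<le> 2 * sqrt (((1 - \<delta>) * Re w)\<^sup>2 + ((1 + \<delta>) * Im w)\<^sup>2) * (N Y)\<^sup>2"
      using pn by (intro mult_left_mono) auto
    finally show ?thesis by linarith
  qed
  have e5: "Re Rt \<ge> - (2 * (1 + \<delta>) * N Y * N t)"
  proof -
    have RtE: "Rt = (- ip Y (V t)) + (- ip (V t) Y) + complex_of_real \<delta> * ip (V Y) t + complex_of_real \<delta> * ip t (V Y)"
      unfolding Rt_def by simp
    have "cmod Rt \<le> cmod (- ip Y (V t)) + cmod (- ip (V t) Y) + cmod (complex_of_real \<delta> * ip (V Y) t) + cmod (complex_of_real \<delta> * ip t (V Y))"
      unfolding RtE by (rule tri4)
    also have "\<dots> = cmod (ip Y (V t)) + cmod (ip (V t) Y) + \<delta> * cmod (ip (V Y) t) + \<delta> * cmod (ip t (V Y))"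
      using d0 by (simp only: norm_minus_cancel norm_mult norm_of_real abs_of_pos)
    also have "\<dots> \<le> N Y * N t + N t * N Y + \<delta> * (N Y * N t) + \<delta> * (N t * N Y)"
      using d0 CS[of Y "V t"] CS[of "V t" Y] CS[of "V Y" t] CS[of t "V Y"]
      by (intro add_mono mult_left_mono) (auto simp: N_V)
    finally have "cmod Rt \<le> 2 * (1 + \<delta>) * N Y * N t" by (simp add: algebra_simps)
    moreover have "- cmod Rt \<le> Re Rt" using abs_Re_le_cmod[of Rt] by linarith
    ultimately show ?thesis by linarith
  qed
  show ?thesis unfolding e1 using e3 e4 e5 unfolding cw_def by (simp add: algebra_simps)
qed

end

lemma cauchy_limit:
  fixes P :: "complex \<Rightarrow> complex"
  assumes d: "d > 0"
    and B: "\<And>l l'. l \<noteq> m \<Longrightarrow> l' \<noteq> m \<Longrightarrow> cmod (l - m) < d \<Longrightarrow> cmod (l' - m) < d \<Longrightarrow>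
              cmod (P l - P l') \<le> C * (cmod (l - m) + cmod (l' - m))"
  shows "\<exists>L. (P \<longlongrightarrow> L) (at m)"
proof -
  define s where "s n = m + of_real (d / (real n + 2))" for n :: nat
  have sm: "cmod (s n - m) = d / (real n + 2)" for n
  proof -
    have "cmod (s n - m) = \<bar>d / (real n + 2)\<bar>" unfolding s_def by (simp only: add_diff_cancel_left' norm_of_real)
    then show ?thesis using d by simp
  qed
  have sne: "s n \<noteq> m" for n using sm[of n] d by auto
  have slt: "cmod (s n - m) < d" for n
  proof -
    have "d / (real n + 2) < d" using d by (simp add: divide_less_eq)
    then show ?thesis by (simp only: sm)
  qed
  have C0: "C \<ge> 0"
  proof -
    have "cmod (P (s 0) - P (s 0)) \<le> C * (cmod (s 0 - m) + cmod (s 0 - m))"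
      using B[OF sne sne slt slt] .
    moreover have "cmod (s 0 - m) > 0" using sne[of 0] by simp
    ultimately show ?thesis by (simp add: zero_le_mult_iff)
  qed
  have "Cauchy (\<lambda>n. P (s n))"
  proof (rule CauchyI)
    fix e :: real assume e: "e > 0"
    obtain M :: nat where M: "2 * C * d / e < real M" using reals_Archimedean2 by blast
    have "\<forall>mm\<ge>M. \<forall>n\<ge>M. cmod (P (s mm) - P (s n)) < e"
    proof (intro allI impI)
      fix mm n assume mm: "mm \<ge> M" and n: "n \<ge> M"
      have "cmod (P (s mm) - P (s n)) \<le> C * (d / (real mm + 2) + d / (real n + 2))"
        using B[OF sne sne slt slt] by (simp add: sm)
      also have "\<dots> \<le> C * (d / (real M + 2) + d / (real M + 2))"
        using mm n d C0 by (intro mult_left_mono add_mono divide_left_mono) auto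
      also have "\<dots> = (2 * C * d) / (real M + 2)" by (simp add: algebra_simps)
      also have "\<dots> < e"
      proof -
        have "2 * C * d < e * real M" using M e by (simp add: pos_divide_less_eq mult.commute)
        also have "\<dots> \<le> e * (real M + 2)" using e by simp
        finally show ?thesis by (simp add: pos_divide_less_eq)
      qed
      finally show "cmod (P (s mm) - P (s n)) < e" .
    qed
    then show "\<exists>M. \<forall>mm\<ge>M. \<forall>n\<ge>M. norm (P (s mm) - P (s n)) < e" by blast
  qed
  then obtain L where L: "(\<lambda>n. P (s n)) \<longlonglongrightarrow> L"
    using Cauchy_convergent_iff convergent_def by blast
  have bnd: "cmod (P l - L) \<le> C * cmod (l - m)" if "l \<noteq> m" "cmod (l - m) < d" for l
  proof (rule LIMSEQ_le)
    show "(\<lambda>n. cmod (P l - P (s n))) \<longlonglongrightarrow> cmod (P l - L)"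
      by (intro tendsto_intros L)
    have "(\<lambda>n. d / (real n + 2)) \<longlonglongrightarrow> 0"
    proof -
      have "(\<lambda>n. d / (real (n + 2))) \<longlonglongrightarrow> 0"
        using LIMSEQ_ignore_initial_segment[OF lim_const_over_n[of d], of 2] by simp
      then show ?thesis by (simp add: add.commute)
    qed
    then have h: "(\<lambda>n. cmod (l - m) + d / (real n + 2)) \<longlonglongrightarrow> cmod (l - m) + 0"
      by (rule tendsto_add[OF tendsto_const])
    show "(\<lambda>n. C * (cmod (l - m) + d / (real n + 2))) \<longlonglongrightarrow> C * cmod (l - m)"
      using tendsto_mult_left[OF h] by simp
    show "\<exists>N. \<forall>n\<ge>N. cmod (P l - P (s n)) \<le> C * (cmod (l - m) + d / (real n + 2))"
      using B[OF that(1) sne that(2) slt] by (auto simp: sm)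
  qed
  have "((\<lambda>l. P l - L) \<longlongrightarrow> 0) (at m)"
  proof (rule Lim_null_comparison)
    show "\<forall>\<^sub>F l in at m. norm (P l - L) \<le> C * cmod (l - m)"
      unfolding eventually_at using d bnd by (auto simp: dist_norm)
    show "((\<lambda>l. C * cmod (l - m)) \<longlongrightarrow> 0) (at m)"
      by (auto intro!: tendsto_eq_intros)
  qed
  then show ?thesis using LIM_zero_cancel by blast
qed

lemma grp1: fixes a b c :: "'a::ab_group_add" shows "a - (b + c) + c = a - b"
  by (simp add: algebra_simps)
lemma grp2: fixes a a' b b' h :: "'a::ab_group_add" shows "(a + b + h) - (a' + b' + h) = (a - a') + (b - b')"
  by (simp add: algebra_simps)
lemma grp3: fixes a b h :: "'a::ab_group_add" shows "a + b + h = a + (b + h)"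
  by (simp add: algebra_simps)

context main begin

definition Q where "Q mu lam = sc (1 / (lam - mu)) (y lam - y mu)"
definition R where "R mu lam = sc (lam / 2) (Q mu lam) + sc (1 / 2) (y mu)"
definition P where "P mu lam = (f lam - f mu) / (lam - mu)"

lemma Q_exp: "Q mu lam = sc (1 / (lam - mu)) (y lam) - sc (1 / (lam - mu)) (y mu)"
  unfolding Q_def by (rule scale_right_diff_distrib)

lemma R_exp: assumes "lam \<noteq> mu"
  shows "R mu lam = sc (1 / (lam - mu)) (sc (lam / 2) (y lam)) - sc (1 / (lam - mu)) (sc (mu / 2) (y mu))"
proof -
  define c where "c = 1 / (lam - mu)"
  have coef: "lam / 2 * c = c * (mu / 2) + 1 / 2"
    using assms by (simp add: c_def field_simps)
  have "R mu lam = sc (lam / 2) (sc c (y lam)) - sc (lam / 2) (sc c (y mu)) + sc (1 / 2) (y mu)"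
    unfolding R_def Q_exp c_def[symmetric] by (simp only: scale_right_diff_distrib)
  also have "\<dots> = sc (c * (lam / 2)) (y lam) - (sc (c * (mu / 2)) (y mu) + sc (1 / 2) (y mu)) + sc (1 / 2) (y mu)"
  proof -
    have "sc (lam / 2) (sc c (y lam)) = sc (c * (lam / 2)) (y lam)" by (simp only: scale_scale mult.commute)
    moreover have "sc (lam / 2) (sc c (y mu)) = sc (c * (mu / 2)) (y mu) + sc (1 / 2) (y mu)"
      by (simp only: scale_scale coef scale_left_distrib)
    ultimately show ?thesis by simp
  qed
  also have "\<dots> = sc (c * (lam / 2)) (y lam) - sc (c * (mu / 2)) (y mu)"
    by (rule grp1)
  finally show ?thesis unfolding c_def by (simp only: scale_scale)
qed

lemma pairB: assumes mu: "mu \<in> G_delta \<delta>" and l: "lam \<in> G_delta \<delta>" "lam \<noteq> mu"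
  and n: "nu \<in> G_delta \<delta>" "nu \<noteq> mu"
  shows "B2 (Q mu lam) (R mu lam) (Q mu nu) (R mu nu) = - P mu lam * cnj (P mu nu)"
proof -
  define c where "c = 1 / (lam - mu)"
  define d where "d = 1 / (nu - mu)"
  have "B2 (Q mu lam) (R mu lam) (Q mu nu) (R mu nu) = - (c * (f lam - f mu)) * cnj (d * (f nu - f mu))"
    unfolding Q_exp R_exp[OF l(2)] R_exp[OF n(2)] c_def[symmetric] d_def[symmetric]
    by (simp only: B2_diff_l B2_diff_r B2_sc_l B2_sc_r KB mu l n complex_cnj_mult complex_cnj_diff) (simp add: algebra_simps)
  moreover have "c * (f lam - f mu) = P mu lam" "d * (f nu - f mu) = P mu nu"
    unfolding c_def d_def P_def by simp_all
  ultimately show ?thesis by simp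

qed

lemma Q2: assumes mu: "mu \<in> G_delta \<delta>" and l: "lam \<in> G_delta \<delta>" "lam \<noteq> mu"
  shows "Re (B2 (Q mu lam) (R mu lam) (Q mu lam) (R mu lam)) = - (cmod (P mu lam))\<^sup>2"
  using pairB[OF mu l l] by (simp add: complex_norm_square[symmetric] del: complex_cnj_divide)

lemma Q3: assumes mu: "mu \<in> G_delta \<delta>" and l: "lam \<in> G_delta \<delta>" "lam \<noteq> mu"
  and n: "nu \<in> G_delta \<delta>" "nu \<noteq> mu"
  shows "Re (B2 (Q mu lam - Q mu nu) (R mu lam - R mu nu) (Q mu lam - Q mu nu) (R mu lam - R mu nu))
     = - (cmod (P mu lam - P mu nu))\<^sup>2"
proof -
  have "B2 (Q mu lam - Q mu nu) (R mu lam - R mu nu) (Q mu lam - Q mu nu) (R mu lam - R mu nu)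
    = - (P mu lam - P mu nu) * cnj (P mu lam - P mu nu)"
    by (simp only: B2_diff_l B2_diff_r pairB[OF mu l l] pairB[OF mu l n] pairB[OF mu n l] pairB[OF mu n n]
        complex_cnj_diff) (simp add: algebra_simps)
  then have "B2 (Q mu lam - Q mu nu) (R mu lam - R mu nu) (Q mu lam - Q mu nu) (R mu lam - R mu nu)
    = - complex_of_real ((cmod (P mu lam - P mu nu))\<^sup>2)" by (simp only: complex_norm_square mult_minus_left)
  then show ?thesis by simp
qed

lemma R_dec: "R mu lam = sc (mu / 2) (Q mu lam) + (sc (lam / 2 - mu / 2) (Q mu lam) + sc (1 / 2) (y mu))"
proof -
  have "sc (lam / 2) (Q mu lam) = sc (mu / 2) (Q mu lam) + sc (lam / 2 - mu / 2) (Q mu lam)"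
    by (simp flip: scale_left_distrib)
  then show ?thesis unfolding R_def by (simp only: grp3)
qed

lemma R_dec2: "R mu lam - R mu nu = sc (mu / 2) (Q mu lam - Q mu nu) +
   (sc (lam / 2 - mu / 2) (Q mu lam) - sc (nu / 2 - mu / 2) (Q mu nu))"
proof -
  have a: "sc (lam / 2) (Q mu lam) = sc (mu / 2) (Q mu lam) + sc (lam / 2 - mu / 2) (Q mu lam)"
    by (simp flip: scale_left_distrib)
  have b: "sc (nu / 2) (Q mu nu) = sc (mu / 2) (Q mu nu) + sc (nu / 2 - mu / 2) (Q mu nu)"
    by (simp flip: scale_left_distrib)
  show ?thesis unfolding R_def a b grp2 by (simp only: scale_right_diff_distrib)
qed

end

context main begin

lemma G_open: "open (G_delta \<delta>)"
  unfolding G_delta_def by (rule open_Collect_less) (use d0 d1 in \<open>auto intro!: continuous_intros\<close>)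

lemma eps_eq: "cmod (lam / 2 - mu / 2) = cmod (lam - mu) / 2"
proof -
  have e: "lam / 2 - mu / 2 = (lam - mu) / 2" by (simp add: field_simps)
  show ?thesis unfolding e by (simp add: norm_divide)
qed

lemma diff_at: assumes mu: "mu \<in> G_delta \<delta>"
  shows "\<exists>L. (P mu \<longlongrightarrow> L) (at mu)"
proof -
  define c where "c = cw (mu / 2)"
  define K where "K = 2 * (1 + \<delta>)"
  have c0: "c > 0" unfolding c_def by (rule cw_pos[OF mu])
  have K0: "K > 0" unfolding K_def using d0 by simp
  obtain e where e: "e > 0" "ball mu e \<subseteq> G_delta \<delta>"
    using G_open mu open_contains_ball by blast
  define d where "d = min e (c / K)"
  have d0': "d > 0" unfolding d_def using e c0 K0 by simp
  have inG: "l \<in> G_delta \<delta>" if "cmod (l - mu) < d" for l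
  proof -
    have "dist mu l < e" using that by (simp add: d_def dist_norm norm_minus_commute)
    then show ?thesis using e by auto
  qed
  have Keps: "K * cmod (l / 2 - mu / 2) \<le> c / 2" if "cmod (l - mu) < d" for l
  proof -
    have "cmod (l - mu) \<le> c / K" using that by (simp add: d_def)
    then have "K * cmod (l - mu) \<le> c" using K0 by (simp add: field_simps)
    then show ?thesis by (simp add: eps_eq)
  qed
  define Nm where "Nm = N (y mu)"
  define Mq where "Mq = K * Nm / c"
  have Qb: "N (Q mu l) \<le> Mq" if l: "l \<noteq> mu" "cmod (l - mu) < d" for l
  proof -
    have lG: "l \<in> G_delta \<delta>" using inG l by blast
    define q where "q = N (Q mu l)"
    define tl where "tl = sc (l / 2 - mu / 2) (Q mu l) + sc (1 / 2) (y mu)"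
    define ep where "ep = cmod (l / 2 - mu / 2)"
    have q0: "q \<ge> 0" "ep \<ge> 0" "Nm \<ge> 0" by (simp_all add: q_def ep_def Nm_def)
    have Nt: "N tl \<le> ep * q + Nm / 2"
      using N_add[of "sc (l / 2 - mu / 2) (Q mu l)" "sc (1 / 2) (y mu)"]
      by (simp add: tl_def N_sc ep_def q_def Nm_def)
    have "c * q\<^sup>2 - K * q * N tl \<le> Re (B2 (Q mu l) (R mu l) (Q mu l) (R mu l))"
      using core[where Y="Q mu l" and w="mu / 2" and t=tl] unfolding R_dec[of mu l] tl_def[symmetric] c_def K_def q_def
      by simp
    also have "\<dots> \<le> 0" using Q2[OF mu lG l(1)] by simp
    finally have h1: "c * q\<^sup>2 \<le> K * q * N tl" by simp
    have h2: "K * q * N tl \<le> K * q * (ep * q + Nm / 2)"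
      using Nt K0 q0 by (intro mult_left_mono) auto
    have h3: "K * ep \<le> c / 2" using Keps[OF l(2)] by (simp add: ep_def)
    have h4: "(K * ep) * q\<^sup>2 \<le> (c / 2) * q\<^sup>2" using h3 by (rule mult_right_mono) simp
    have "K * q * (ep * q + Nm / 2) = (K * ep) * q\<^sup>2 + (K / 2) * q * Nm"
      by (simp add: power2_eq_square algebra_simps)
    with h1 h2 h4 have "(c / 2) * q\<^sup>2 \<le> (K / 2) * q * Nm" by linarith
    then have h5: "q * (c * q) \<le> q * (K * Nm)" by (simp add: power2_eq_square algebra_simps)
    show ?thesis
    proof (cases "q = 0")
      case True then show ?thesis using K0 c0 q0 by (simp add: Mq_def q_def)
    next
      case False
      then have "c * q \<le> K * Nm" using h5 q0 by (simp add: mult_le_cancel_left)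
      then show ?thesis using c0 by (simp add: Mq_def q_def field_simps)
    qed
  qed
  define C where "C = K * Mq / (4 * sqrt c)"
  have PB: "cmod (P mu l - P mu l') \<le> C * (cmod (l - mu) + cmod (l' - mu))"
    if l: "l \<noteq> mu" "cmod (l - mu) < d" and l': "l' \<noteq> mu" "cmod (l' - mu) < d" for l l'
  proof -
    have lG: "l \<in> G_delta \<delta>" using inG l by blast
    have lG': "l' \<in> G_delta \<delta>" using inG l' by blast
    define Ya where "Ya = Q mu l - Q mu l'"
    define t where "t = sc (l / 2 - mu / 2) (Q mu l) - sc (l' / 2 - mu / 2) (Q mu l')"
    define pp where "pp = cmod (P mu l - P mu l')"
    define ny where "ny = N Ya"
    have Nt: "N t \<le> (cmod (l - mu) + cmod (l' - mu)) / 2 * Mq"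
    proof -
      have "N t \<le> cmod (l / 2 - mu / 2) * N (Q mu l) + cmod (l' / 2 - mu / 2) * N (Q mu l')"
        using N_diff[of "sc (l / 2 - mu / 2) (Q mu l)" "sc (l' / 2 - mu / 2) (Q mu l')"]
        by (simp add: t_def N_sc)
      also have "\<dots> \<le> cmod (l / 2 - mu / 2) * Mq + cmod (l' / 2 - mu / 2) * Mq"
        using Qb[OF l] Qb[OF l'] by (intro add_mono mult_left_mono) auto
      finally show ?thesis by (simp add: eps_eq algebra_simps add_divide_distrib)
    qed
    have "c * ny\<^sup>2 - K * ny * N t \<le> Re (B2 Ya (R mu l - R mu l') Ya (R mu l - R mu l'))"
      using core[where Y=Ya and w="mu / 2" and t=t] unfolding R_dec2[of mu l l'] Ya_def[symmetric] t_def[symmetric] c_def K_def ny_def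
      by simp
    also have "\<dots> = - pp\<^sup>2" unfolding Ya_def pp_def by (rule Q3[OF mu lG l(1) lG' l'(1)])
    finally have h1: "pp\<^sup>2 \<le> K * ny * N t - c * ny\<^sup>2" by simp
    have "4 * c * (K * ny * N t - c * ny\<^sup>2) = (K * N t)\<^sup>2 - (2 * c * ny - K * N t)\<^sup>2"
      by (simp add: power2_eq_square algebra_simps)
    also have "\<dots> \<le> (K * N t)\<^sup>2" by simp
    finally have "4 * c * (K * ny * N t - c * ny\<^sup>2) \<le> (K * N t)\<^sup>2" .
    moreover have "4 * c * pp\<^sup>2 \<le> 4 * c * (K * ny * N t - c * ny\<^sup>2)" using h1 c0 by simp
    ultimately have "4 * c * pp\<^sup>2 \<le> (K * N t)\<^sup>2" by linarith
    moreover have "(2 * sqrt c * pp)\<^sup>2 = 4 * c * pp\<^sup>2" using c0 by (simp add: power_mult_distrib)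
    ultimately have "(2 * sqrt c * pp)\<^sup>2 \<le> (K * N t)\<^sup>2" by simp
    then have "2 * sqrt c * pp \<le> K * N t" by (rule power2_le_imp_le) (use K0 in simp)
    then have "pp \<le> K * N t / (2 * sqrt c)" using c0 by (simp add: field_simps)
    also have "\<dots> \<le> K * ((cmod (l - mu) + cmod (l' - mu)) / 2 * Mq) / (2 * sqrt c)"
      using Nt K0 c0 by (intro divide_right_mono mult_left_mono) auto
    also have "\<dots> = C * (cmod (l - mu) + cmod (l' - mu))" by (simp add: C_def field_simps)
    finally show ?thesis by (simp add: pp_def)
  qed
  show ?thesis by (rule cauchy_limit[OF d0' PB])
qed

theorem holo: "f holomorphic_on G_delta \<delta>"
  unfolding holomorphic_on_def
proof
  fix mu assume mu: "mu \<in> G_delta \<delta>"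
  obtain L where "(P mu \<longlongrightarrow> L) (at mu)" using diff_at[OF mu] by blast
  then have "(f has_field_derivative L) (at mu)"
    unfolding has_field_derivative_iff P_def[abs_def] by simp
  then show "f field_differentiable at mu within G_delta \<delta>"
    using field_differentiable_at_within field_differentiable_def by blast
qed

end

theorem proposition2p9:
  fixes \<delta> :: real and f :: "complex \<Rightarrow> complex"
    and sc :: "complex \<Rightarrow> 'm::ab_group_add \<Rightarrow> 'm" and ip :: "'m \<Rightarrow> 'm \<Rightarrow> complex"
    and U :: "'m \<Rightarrow> 'm" and u :: "complex \<Rightarrow> 'm"
  assumes "0 < \<delta>" and "\<delta> < 1"
    and "hilbert_space sc ip"
    and "unitary_op sc ip U"
    and "\<forall>lam\<in>G_delta \<delta>. \<forall>mu\<in>G_delta \<delta>.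
           1 - cnj (f mu) * f lam =
           ip (u lam - hadj ip (lamU sc ip \<delta> U mu) (lamU sc ip \<delta> U lam (u lam))) (u mu)"
  shows "f holomorphic_on G_delta \<delta>"
proof -
  interpret m: main sc ip U \<delta> f u
    by unfold_locales (use assms in auto)
  show ?thesis by (rule m.holo)
qed

end
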